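(* Under the standing assumptions, $G$ does not contain a vertex $v$ of degree $8$ together with pairwise distinct neighbours $x,y,z,t,r$ of $v$ and a vertex $p\notin\{v,x,y,z,t,r\}$ such that $d(x)=2$, $d(z)=d(t)=3$, $yz,tr\in E(G)$, and $p$ is adjacent to both $z$ and $t$.
   Context: Standing assumptions: A total $9$-coloring of a graph is an assignment of colors from $\{1,\dots,9\}$ to the vertices and edges such that adjacent vertices, edges sharing an endpoint, and a vertex and an incident edge receive different colors. A $4$-fan is the graph on six vertices $c,u_1,\dots,u_5$ with edges $cu_j$ ($1\le j\le5$) and $u_ju_{j+1}$ ($1\le j\le4$). $G$ is a minimal counterexample: $G$ is a simple planar graph with maximum degree $8$, containing no subgraph isomorphic to a $4$-fan, that has no total $9$-coloring, and such that every simple planar graph $H$ with maximum degree at most $8$, no subgraph isomorphic to a $4$-fan, and $|V(H)|+|E(H)|<|V(G)|+|E(G)|$ has a total $9$-coloring. $d(\cdot)$ denotes degree in $G$. *)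

theory Defs
  imports "HOL-Analysis.Analysis"
begin

definition simple_graph :: "'a set \<Rightarrow> 'a set set \<Rightarrow> bool" where
  "simple_graph V E \<longleftrightarrow> finite V \<and>
     (\<forall>e\<in>E. \<exists>u v. e = {u, v} \<and> u \<noteq> v \<and> u \<in> V \<and> v \<in> V)"

definition adj :: "'a set set \<Rightarrow> 'a \<Rightarrow> 'a \<Rightarrow> bool" where
  "adj E u v \<longleftrightarrow> u \<noteq> v \<and> {u, v} \<in> E"

definition degree :: "'a set \<Rightarrow> 'a set set \<Rightarrow> 'a \<Rightarrow> nat" where
  "degree V E v = card {u \<in> V. adj E v u}"

definition max_degree_le :: "'a set \<Rightarrow> 'a set set \<Rightarrow> nat \<Rightarrow> bool" where
  "max_degree_le V E k \<longleftrightarrow> (\<forall>v\<in>V. degree V E v \<le> k)"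

definition max_degree_eq :: "'a set \<Rightarrow> 'a set set \<Rightarrow> nat \<Rightarrow> bool" where
  "max_degree_eq V E k \<longleftrightarrow> max_degree_le V E k \<and> (\<exists>v\<in>V. degree V E v = k)"

definition planar :: "'a set \<Rightarrow> 'a set set \<Rightarrow> bool" where
  "planar V E \<longleftrightarrow> (\<exists>(pos :: 'a \<Rightarrow> complex) (\<gamma> :: 'a set \<Rightarrow> real \<Rightarrow> complex).
     inj_on pos V \<and>
     (\<forall>e\<in>E. arc (\<gamma> e) \<and> {pathstart (\<gamma> e), pathfinish (\<gamma> e)} = pos ` e \<and>
              path_image (\<gamma> e) \<inter> pos ` V = pos ` e) \<and>
     (\<forall>e\<in>E. \<forall>e'\<in>E. e \<noteq> e' \<longrightarrow>
              path_image (\<gamma> e) \<inter> path_image (\<gamma> e') = pos ` (e \<inter> e')))"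

definition has_4fan :: "'a set \<Rightarrow> 'a set set \<Rightarrow> bool" where
  "has_4fan V E \<longleftrightarrow> (\<exists>c u1 u2 u3 u4 u5.
     distinct [c, u1, u2, u3, u4, u5] \<and> set [c, u1, u2, u3, u4, u5] \<subseteq> V \<and>
     adj E c u1 \<and> adj E c u2 \<and> adj E c u3 \<and> adj E c u4 \<and> adj E c u5 \<and>
     adj E u1 u2 \<and> adj E u2 u3 \<and> adj E u3 u4 \<and> adj E u4 u5)"

definition total_coloring :: "'a set \<Rightarrow> 'a set set \<Rightarrow> nat \<Rightarrow> ('a \<Rightarrow> nat) \<Rightarrow> ('a set \<Rightarrow> nat) \<Rightarrow> bool" where
  "total_coloring V E k cv ce \<longleftrightarrow>
     (\<forall>v\<in>V. cv v \<in> {1..k}) \<and> (\<forall>e\<in>E. ce e \<in> {1..k}) \<and>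
     (\<forall>u\<in>V. \<forall>v\<in>V. adj E u v \<longrightarrow> cv u \<noteq> cv v) \<and>
     (\<forall>e\<in>E. \<forall>e'\<in>E. e \<noteq> e' \<and> e \<inter> e' \<noteq> {} \<longrightarrow> ce e \<noteq> ce e') \<and>
     (\<forall>e\<in>E. \<forall>v\<in>e. cv v \<noteq> ce e)"

definition total_colorable :: "'a set \<Rightarrow> 'a set set \<Rightarrow> nat \<Rightarrow> bool" where
  "total_colorable V E k \<longleftrightarrow> (\<exists>cv ce. total_coloring V E k cv ce)"

text \<open>Minimal counterexample. Competing graphs H range over finite simple graphs
  with vertices labelled by natural numbers (covering all finite graphs up to isomorphism).\<close>
definition minimal_counterexample :: "'a set \<Rightarrow> 'a set set \<Rightarrow> bool" where
  "minimal_counterexample V E \<longleftrightarrow>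
     simple_graph V E \<and> planar V E \<and> max_degree_eq V E 8 \<and> \<not> has_4fan V E \<and>
     \<not> total_colorable V E 9 \<and>
     (\<forall>(VH :: nat set) EH. simple_graph VH EH \<and> planar VH EH \<and> max_degree_le VH EH 8 \<and>
        \<not> has_4fan VH EH \<and> card VH + card EH < card V + card E \<longrightarrow> total_colorable VH EH 9)"

end

theory Submission
  imports Defs
begin


lemma adj_sym: "adj E u w = adj E w u"
  by (auto simp: adj_def insert_commute)

lemma sg_adjV: "simple_graph V E \<Longrightarrow> adj E u w \<Longrightarrow> u \<in> V \<and> w \<in> V"
  unfolding simple_graph_def adj_def by (metis doubleton_eq_iff)

lemma sg_edge: assumes "simple_graph V E" "e \<in> E" shows "\<exists>u w. e = {u,w} \<and> adj E u w"
proof -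
  obtain u w where "e = {u,w}" "u \<noteq> w" using assms unfolding simple_graph_def by blast
  then show ?thesis using assms(2) unfolding adj_def by blast
qed

lemma simple_graph_mono: "simple_graph V E \<Longrightarrow> E' \<subseteq> E \<Longrightarrow> simple_graph V E'"
  unfolding simple_graph_def by (simp add: subset_eq)

lemma planar_mono: assumes "planar V E" "E' \<subseteq> E" shows "planar V E'"
proof -
  obtain pos :: "'a \<Rightarrow> complex" and \<gamma> where P: "inj_on pos V"
     "\<forall>e\<in>E. arc (\<gamma> e) \<and> {pathstart (\<gamma> e), pathfinish (\<gamma> e)} = pos ` e \<and>
              path_image (\<gamma> e) \<inter> pos ` V = pos ` e"
     "\<forall>e\<in>E. \<forall>e'\<in>E. e \<noteq> e' \<longrightarrow>
              path_image (\<gamma> e) \<inter> path_image (\<gamma> e') = pos ` (e \<inter> e')"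
    using assms(1) unfolding planar_def by blast
  have "\<forall>e\<in>E'. arc (\<gamma> e) \<and> {pathstart (\<gamma> e), pathfinish (\<gamma> e)} = pos ` e \<and>
              path_image (\<gamma> e) \<inter> pos ` V = pos ` e" using P(2) assms(2) by (simp add: subset_eq)
  moreover have "\<forall>e\<in>E'. \<forall>e'\<in>E'. e \<noteq> e' \<longrightarrow>
              path_image (\<gamma> e) \<inter> path_image (\<gamma> e') = pos ` (e \<inter> e')" using P(3) assms(2) by (simp add: subset_eq)
  ultimately show ?thesis unfolding planar_def using P(1) by blast
qed

lemma adj_mono: "E' \<subseteq> E \<Longrightarrow> adj E' u w \<Longrightarrow> adj E u w"
  unfolding adj_def by blast

lemma degree_mono: "finite V \<Longrightarrow> E' \<subseteq> E \<Longrightarrow> degree V E' u \<le> degree V E u"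
  unfolding degree_def by (rule card_mono) (auto dest: adj_mono)

lemma maxdeg_mono: assumes "finite V" "max_degree_le V E k" "E' \<subseteq> E" shows "max_degree_le V E' k"
  unfolding max_degree_le_def
proof
  fix u assume "u \<in> V"
  then have "degree V E u \<le> k" using assms(2) unfolding max_degree_le_def by blast
  then show "degree V E' u \<le> k" using degree_mono[OF assms(1,3), of u] by linarith
qed

lemma fan_mono: assumes "has_4fan V E'" "E' \<subseteq> E" shows "has_4fan V E"
proof -
  obtain c u1 u2 u3 u4 u5 where h:
    "distinct [c, u1, u2, u3, u4, u5]" "set [c, u1, u2, u3, u4, u5] \<subseteq> V"
    "adj E' c u1" "adj E' c u2" "adj E' c u3" "adj E' c u4" "adj E' c u5"
    "adj E' u1 u2" "adj E' u2 u3" "adj E' u3 u4" "adj E' u4 u5"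
    using assms(1) unfolding has_4fan_def by blast
  have "adj E c u1" "adj E c u2" "adj E c u3" "adj E c u4" "adj E c u5"
    "adj E u1 u2" "adj E u2 u3" "adj E u3 u4" "adj E u4 u5"
    using h adj_mono[OF assms(2)] by blast+
  then show ?thesis unfolding has_4fan_def using h(1,2) by blast
qed

lemma sg_sub: assumes "simple_graph V E" "e \<in> E" shows "e \<subseteq> V"
proof -
  obtain u w where "e = {u,w}" "u \<in> V" "w \<in> V" using assms unfolding simple_graph_def by metis
  then show ?thesis by simp
qed


lemma tr_sg:
  assumes "simple_graph V E" "inj_on f V"
  shows "simple_graph (f ` V) ((\<lambda>e. f ` e) ` E)"
  unfolding simple_graph_def
proof (intro conjI ballI)
  show "finite (f ` V)" using assms(1) unfolding simple_graph_def by simp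
next
  fix e' assume "e' \<in> (\<lambda>e. f ` e) ` E"
  then obtain e where e: "e \<in> E" "e' = f ` e" by blast
  obtain u w where uw: "e = {u,w}" "u \<noteq> w" "u \<in> V" "w \<in> V" using assms(1) e(1) unfolding simple_graph_def by metis
  have "f u \<noteq> f w" using uw assms(2) unfolding inj_on_def by metis
  then show "\<exists>u w. e' = {u, w} \<and> u \<noteq> w \<and> u \<in> f ` V \<and> w \<in> f ` V" using uw e(2) by auto
qed

lemma tr_adj:
  assumes "simple_graph V E" "inj_on f V" "u \<in> V" "w \<in> V"
  shows "adj ((\<lambda>e. f ` e) ` E) (f u) (f w) \<longleftrightarrow> adj E u w"
proof
  assume a: "adj E u w"
  then have "{u,w} \<in> E" "u \<noteq> w" unfolding adj_def by auto
  moreover have "f u \<noteq> f w" using \<open>u \<noteq> w\<close> assms(2-4) unfolding inj_on_def by metis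
  ultimately show "adj ((\<lambda>e. f ` e) ` E) (f u) (f w)"
    unfolding adj_def by (metis image_empty image_insert image_eqI)
next
  assume a: "adj ((\<lambda>e. f ` e) ` E) (f u) (f w)"
  then obtain e where e: "e \<in> E" "f ` e = {f u, f w}" "f u \<noteq> f w" unfolding adj_def by auto
  have es: "e \<subseteq> V" using assms(1) e(1) by (rule sg_sub)
  have "{u,w} \<subseteq> V" using assms(3,4) by simp
  moreover have "f ` e = f ` {u,w}" using e(2) by simp
  ultimately have "e = {u, w}" using es inj_on_image_eq_iff[OF assms(2)] by metis
  then show "adj E u w" using e unfolding adj_def by auto
qed

lemma tr_degree:
  assumes "simple_graph V E" "inj_on f V" "u \<in> V"
  shows "degree (f ` V) ((\<lambda>e. f ` e) ` E) (f u) = degree V E u"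
proof -
  have "{w' \<in> f ` V. adj ((\<lambda>e. f ` e) ` E) (f u) w'} = f ` {w \<in> V. adj E u w}"
    using tr_adj[OF assms(1,2) assms(3)] by auto
  moreover have "inj_on f {w \<in> V. adj E u w}" using assms(2) by (rule inj_on_subset) auto
  ultimately show ?thesis unfolding degree_def by (simp add: card_image)
qed

lemma tr_maxdeg:
  assumes "simple_graph V E" "inj_on f V" "max_degree_le V E k"
  shows "max_degree_le (f ` V) ((\<lambda>e. f ` e) ` E) k"
  unfolding max_degree_le_def
proof
  fix u' assume "u' \<in> f ` V"
  then obtain u where "u \<in> V" "u' = f u" by blast
  then show "degree (f ` V) ((\<lambda>e. f ` e) ` E) u' \<le> k"
    using tr_degree[OF assms(1,2)] assms(3) unfolding max_degree_le_def by simp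
qed

lemma tr_card_E:
  assumes "simple_graph V E" "inj_on f V"
  shows "card ((\<lambda>e. f ` e) ` E) = card E"
proof -
  have "inj_on (\<lambda>e. f ` e) E"
  proof (rule inj_onI)
    fix a1 a2 assume "a1 \<in> E" "a2 \<in> E" "f ` a1 = f ` a2"
    moreover have "a1 \<subseteq> V" "a2 \<subseteq> V" using assms(1) \<open>a1 \<in> E\<close> \<open>a2 \<in> E\<close> by (simp_all add: sg_sub)
    ultimately show "a1 = a2" using inj_on_image_eq_iff[OF assms(2)] by metis
  qed
  then show ?thesis by (rule card_image)
qed

lemma tr_col:
  assumes "simple_graph V E" "inj_on f V" "total_colorable (f ` V) ((\<lambda>e. f ` e) ` E) k"
  shows "total_colorable V E k"
proof -
  obtain cv ce where c: "total_coloring (f ` V) ((\<lambda>e. f ` e) ` E) k cv ce"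
    using assms(3) unfolding total_colorable_def by blast
  have ie: "\<And>a1 a2. a1 \<in> E \<Longrightarrow> a2 \<in> E \<Longrightarrow> f ` a1 = f ` a2 \<Longrightarrow> a1 = a2"
  proof -
    fix a1 a2 assume h: "a1 \<in> E" "a2 \<in> E" "f ` a1 = f ` a2"
    have "a1 \<subseteq> V" "a2 \<subseteq> V" using assms(1) h by (simp_all add: sg_sub)
    then show "a1 = a2" using h inj_on_image_eq_iff[OF assms(2)] by metis
  qed
  note cc = c[unfolded total_coloring_def]
  note c1 = conjunct1[OF cc] and c2 = conjunct1[OF conjunct2[OF cc]]
    and c3 = conjunct1[OF conjunct2[OF conjunct2[OF cc]]]
    and c4 = conjunct1[OF conjunct2[OF conjunct2[OF conjunct2[OF cc]]]]
    and c5 = conjunct2[OF conjunct2[OF conjunct2[OF conjunct2[OF cc]]]]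
  have "total_coloring V E k (cv \<circ> f) (\<lambda>e. ce (f ` e))"
    unfolding total_coloring_def
  proof (intro conjI ballI impI)
    fix u assume "u \<in> V" then show "(cv \<circ> f) u \<in> {1..k}" using c1 by simp
  next
    fix e assume "e \<in> E" then show "ce (f ` e) \<in> {1..k}" using c2 by simp
  next
    fix u w assume h: "u \<in> V" "w \<in> V" "adj E u w"
    then have "adj ((\<lambda>e. f ` e) ` E) (f u) (f w)" using tr_adj[OF assms(1,2)] by simp
    then show "(cv \<circ> f) u \<noteq> (cv \<circ> f) w" using c3 h(1,2) by simp
  next
    fix e e' assume h: "e \<in> E" "e' \<in> E" "e \<noteq> e' \<and> e \<inter> e' \<noteq> {}"
    have "f ` e \<noteq> f ` e'" using ie h by metis
    moreover have "f ` e \<inter> f ` e' \<noteq> {}" using h by blast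
    ultimately show "ce (f ` e) \<noteq> ce (f ` e')" using c4 h(1,2) by simp
  next
    fix e u assume "e \<in> E" "u \<in> e"
    then show "(cv \<circ> f) u \<noteq> ce (f ` e)" using c5 by simp
  qed
  then show ?thesis unfolding total_colorable_def by blast
qed



lemma tr_fan:
  assumes "simple_graph V E" "inj_on f V" "has_4fan (f ` V) ((\<lambda>e. f ` e) ` E)"
  shows "has_4fan V E"
proof -
  let ?E = "(\<lambda>e. f ` e) ` E"
  obtain c u1 u2 u3 u4 u5 where h:
    "distinct [c, u1, u2, u3, u4, u5]" "set [c, u1, u2, u3, u4, u5] \<subseteq> f ` V"
    "adj ?E c u1" "adj ?E c u2" "adj ?E c u3" "adj ?E c u4" "adj ?E c u5"
    "adj ?E u1 u2" "adj ?E u2 u3" "adj ?E u3 u4" "adj ?E u4 u5"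
    using assms(3) unfolding has_4fan_def by blast
  have s: "c \<in> f ` V" "u1 \<in> f ` V" "u2 \<in> f ` V" "u3 \<in> f ` V" "u4 \<in> f ` V" "u5 \<in> f ` V"
    using h(2) by simp_all
  obtain c' where c': "c' \<in> V" "c = f c'" using s(1) by blast
  obtain u1' where u1': "u1' \<in> V" "u1 = f u1'" using s(2) by blast
  obtain u2' where u2': "u2' \<in> V" "u2 = f u2'" using s(3) by blast
  obtain u3' where u3': "u3' \<in> V" "u3 = f u3'" using s(4) by blast
  obtain u4' where u4': "u4' \<in> V" "u4 = f u4'" using s(5) by blast
  obtain u5' where u5': "u5' \<in> V" "u5 = f u5'" using s(6) by blast
  note T = tr_adj[OF assms(1,2)]
  have "adj E c' u1'" "adj E c' u2'" "adj E c' u3'" "adj E c' u4'" "adj E c' u5'"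
       "adj E u1' u2'" "adj E u2' u3'" "adj E u3' u4'" "adj E u4' u5'"
    using h(3-11) c' u1' u2' u3' u4' u5' T by simp_all
  moreover have "distinct [c', u1', u2', u3', u4', u5']" using h(1) c' u1' u2' u3' u4' u5' by auto
  moreover have "set [c', u1', u2', u3', u4', u5'] \<subseteq> V" using c' u1' u2' u3' u4' u5' by simp
  ultimately show ?thesis unfolding has_4fan_def by blast
qed

lemma tr_planar:
  assumes "simple_graph V E" "inj_on f V" "planar V E"
  shows "planar (f ` V) ((\<lambda>e. f ` e) ` E)"
proof -
  obtain pos :: "'a \<Rightarrow> complex" and \<gamma> where P: "inj_on pos V"
     "\<forall>e\<in>E. arc (\<gamma> e) \<and> {pathstart (\<gamma> e), pathfinish (\<gamma> e)} = pos ` e \<and>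
              path_image (\<gamma> e) \<inter> pos ` V = pos ` e"
     "\<forall>e\<in>E. \<forall>e'\<in>E. e \<noteq> e' \<longrightarrow>
              path_image (\<gamma> e) \<inter> path_image (\<gamma> e') = pos ` (e \<inter> e')"
    using assms(3) unfolding planar_def by blast
  define g where "g = inv_into V f"
  have gf: "\<And>S. S \<subseteq> V \<Longrightarrow> g ` f ` S = S" unfolding g_def using assms(2) by (simp add: inv_into_image_cancel)
  have gf1: "\<And>u. u \<in> V \<Longrightarrow> g (f u) = u" unfolding g_def using assms(2) by simp
  have sub: "\<And>e. e \<in> E \<Longrightarrow> e \<subseteq> V" using assms(1) by (rule sg_sub)
  define pos' where "pos' = pos \<circ> g"
  define \<gamma>' where "\<gamma>' = (\<lambda>e'. \<gamma> (g ` e'))"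
  have inj: "inj_on pos' (f ` V)"
  proof (rule inj_onI)
    fix a b assume "a \<in> f ` V" "b \<in> f ` V" "pos' a = pos' b"
    then obtain a' b' where "a' \<in> V" "b' \<in> V" "a = f a'" "b = f b'" "pos (g (f a')) = pos (g (f b'))"
      unfolding pos'_def by auto
    then show "a = b" using gf1 P(1) unfolding inj_on_def by metis
  qed
  have img: "\<And>S. S \<subseteq> V \<Longrightarrow> pos' ` f ` S = pos ` S"
  proof -
    fix S assume "S \<subseteq> V"
    have "pos' ` f ` S = pos ` (g ` f ` S)" unfolding pos'_def by (simp add: image_comp)
    then show "pos' ` f ` S = pos ` S" using gf[OF \<open>S \<subseteq> V\<close>] by simp
  qed
  have ge: "\<And>e. e \<in> E \<Longrightarrow> \<gamma>' (f ` e) = \<gamma> e" unfolding \<gamma>'_def using gf sub by simp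
  have A: "\<forall>e'\<in>(\<lambda>e. f ` e) ` E. arc (\<gamma>' e') \<and> {pathstart (\<gamma>' e'), pathfinish (\<gamma>' e')} = pos' ` e' \<and>
              path_image (\<gamma>' e') \<inter> pos' ` (f ` V) = pos' ` e'"
  proof
    fix e' assume "e' \<in> (\<lambda>e. f ` e) ` E"
    then obtain e where e: "e \<in> E" "e' = f ` e" by blast
    show "arc (\<gamma>' e') \<and> {pathstart (\<gamma>' e'), pathfinish (\<gamma>' e')} = pos' ` e' \<and>
              path_image (\<gamma>' e') \<inter> pos' ` (f ` V) = pos' ` e'"
      using P(2) e ge[OF e(1)] img[OF sub[OF e(1)]] img[OF order_refl] by simp
  qed
  have B: "\<forall>e1\<in>(\<lambda>e. f ` e) ` E. \<forall>e2\<in>(\<lambda>e. f ` e) ` E. e1 \<noteq> e2 \<longrightarrow>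
              path_image (\<gamma>' e1) \<inter> path_image (\<gamma>' e2) = pos' ` (e1 \<inter> e2)"
  proof (intro ballI impI)
    fix e1 e2 assume "e1 \<in> (\<lambda>e. f ` e) ` E" "e2 \<in> (\<lambda>e. f ` e) ` E" "e1 \<noteq> e2"
    then obtain a1 a2 where a: "a1 \<in> E" "a2 \<in> E" "e1 = f ` a1" "e2 = f ` a2" "a1 \<noteq> a2" by blast
    have "e1 \<inter> e2 = f ` (a1 \<inter> a2)" using a(3,4) sub[OF a(1)] sub[OF a(2)] assms(2) by (simp add: inj_on_image_Int)
    moreover have "a1 \<inter> a2 \<subseteq> V" using sub[OF a(1)] by blast
    ultimately have "pos' ` (e1 \<inter> e2) = pos ` (a1 \<inter> a2)" using img by simp
    moreover have "path_image (\<gamma> a1) \<inter> path_image (\<gamma> a2) = pos ` (a1 \<inter> a2)" using P(3) a(1,2,5) by blast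
    ultimately show "path_image (\<gamma>' e1) \<inter> path_image (\<gamma>' e2) = pos' ` (e1 \<inter> e2)"
      using a ge by simp
  qed
  show ?thesis unfolding planar_def using inj A B by blast
qed



lemma sg_finiteE: assumes "simple_graph V E" shows "finite E"
proof -
  have "E \<subseteq> Pow V" using sg_sub[OF assms] by blast
  moreover have "finite (Pow V)" using assms unfolding simple_graph_def by simp
  ultimately show ?thesis by (rule finite_subset)
qed

lemma reduce:
  assumes mc: "minimal_counterexample V E" and e0: "e0 \<in> E"
  shows "total_colorable V (E - {e0}) 9"
proof -
  let ?E = "E - {e0}"
  have sg: "simple_graph V E" and pl: "planar V E" and md: "max_degree_eq V E 8"
    and nf: "\<not> has_4fan V E"
    and mn: "\<forall>(VH :: nat set) EH. simple_graph VH EH \<and> planar VH EH \<and> max_degree_le VH EH 8 \<and>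
        \<not> has_4fan VH EH \<and> card VH + card EH < card V + card E \<longrightarrow> total_colorable VH EH 9"
    using mc unfolding minimal_counterexample_def by blast+
  have fV: "finite V" using sg unfolding simple_graph_def by simp
  have fE: "finite E" using sg by (rule sg_finiteE)
  have sub: "?E \<subseteq> E" by blast
  have sg': "simple_graph V ?E" using sg sub by (rule simple_graph_mono)
  have pl': "planar V ?E" using pl sub by (rule planar_mono)
  have md': "max_degree_le V ?E 8" using fV md sub maxdeg_mono unfolding max_degree_eq_def by blast
  have nf': "\<not> has_4fan V ?E" using nf sub fan_mono by blast
  have cE: "card ?E < card E" by (rule card_Diff1_less[OF fE e0])
  obtain f :: "'a \<Rightarrow> nat" and n where f: "f ` V = {i. i < n}" "inj_on f V"
    using finite_imp_inj_to_nat_seg[OF fV] by blast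
  let ?VH = "f ` V" and ?EH = "(\<lambda>e. f ` e) ` ?E"
  have "simple_graph ?VH ?EH" using sg' f(2) by (rule tr_sg)
  moreover have "planar ?VH ?EH" using sg' f(2) pl' by (rule tr_planar)
  moreover have "max_degree_le ?VH ?EH 8" using sg' f(2) md' by (rule tr_maxdeg)
  moreover have "\<not> has_4fan ?VH ?EH" using tr_fan[OF sg' f(2)] nf' by blast
  moreover have "card ?VH + card ?EH < card V + card E"
    using card_image[OF f(2)] tr_card_E[OF sg' f(2)] cE by simp
  ultimately have "total_colorable ?VH ?EH 9" using mn by blast
  then show ?thesis using tr_col[OF sg' f(2)] by blast
qed



definition okc :: "nat\<Rightarrow>nat\<Rightarrow>nat\<Rightarrow>nat\<Rightarrow>nat\<Rightarrow>nat\<Rightarrow>nat\<Rightarrow>nat\<Rightarrow>nat\<Rightarrow>nat\<Rightarrow>nat\<Rightarrow>nat\<Rightarrow>nat\<Rightarrow>nat\<Rightarrow>nat\<Rightarrow>nat\<Rightarrow>nat\<Rightarrow>nat\<Rightarrow>nat\<Rightarrow>bool" where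
 "okc a b g d m c1 c2 d1 d2 w vx vy vz vt vr zy zp tr tp \<longleftrightarrow>
   ((vy = a \<and> zy = c1) \<or> (vy = c1 \<and> zy = a)) \<and> ((vr = b \<and> tr = d1) \<or> (vr = d1 \<and> tr = b)) \<and>
   ((zp = c2 \<and> tp = d2) \<or> (zp = d2 \<and> tp = c2)) \<and>
   distinct [vx,vy,vz,vt,vr] \<and> vx \<in> {a,b,g,d,m} \<and> vy \<in> {a,b,g,d,m} \<and> vz \<in> {a,b,g,d,m} \<and>
   vt \<in> {a,b,g,d,m} \<and> vr \<in> {a,b,g,d,m} \<and>
   distinct [vz,zy,zp] \<and> distinct [vt,tr,tp] \<and> vx \<noteq> w"

lemma core:
 fixes a b g d m c1 c2 d1 d2 w :: nat
 assumes "distinct [a,b,g,d,m]" "c1 \<noteq> a" "c1 \<noteq> g" "c2 \<noteq> g" "c2 \<noteq> c1" "d1 \<noteq> b" "d1 \<noteq> d" "d2 \<noteq> d" "d2 \<noteq> d1" "d2 \<noteq> c2"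
 shows "\<exists>vx vy vz vt vr zy zp tr tp. okc a b g d m c1 c2 d1 d2 w vx vy vz vt vr zy zp tr tp"
proof -
  have "okc a b g d m c1 c2 d1 d2 w m a g d b c1 c2 d1 d2 \<or> okc a b g d m c1 c2 d1 d2 w g a m d b c1 c2 d1 d2 \<or>
        okc a b g d m c1 c2 d1 d2 w d a g m b c1 c2 d1 d2 \<or> okc a b g d m c1 c2 d1 d2 w b a g d d1 c1 c2 b d2 \<or>
        okc a b g d m c1 c2 d1 d2 w a c1 g d b a c2 d1 d2 \<or> okc a b g d m c1 c2 d1 d2 w b a g d d1 c1 d2 b c2 \<or>
        okc a b g d m c1 c2 d1 d2 w a c1 g d b a d2 d1 c2 \<or> okc a b g d m c1 c2 d1 d2 w a c1 g d d1 a d2 b c2 \<or>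
        okc a b g d m c1 c2 d1 d2 w b c1 g d d1 a d2 b c2"
    using assms unfolding okc_def by (smt (z3) distinct_length_2_or_more distinct_singleton insert_iff singletonD)
  then show ?thesis by blast
qed

lemma pick6: "\<exists>c\<in>{1..9::nat}. c \<notin> {a1,a2,a3,a4,a5,a6}"
proof (rule ccontr)
  assume "\<not> ?thesis"
  then have "{1..9::nat} \<subseteq> set [a1,a2,a3,a4,a5,a6]" by auto
  then have "card {1..9::nat} \<le> card (set [a1,a2,a3,a4,a5,a6])" by (intro card_mono) simp_all
  also have "\<dots> \<le> 6" using card_length[of "[a1,a2,a3,a4,a5,a6]"] by simp
  finally show False by simp
qed

lemma edge_at: assumes "simple_graph V E" "e \<in> E" "q \<in> e" shows "\<exists>u. e = {q,u} \<and> adj E q u"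
proof -
  obtain a b where ab: "e = {a,b}" "adj E a b" using sg_edge[OF assms(1,2)] by blast
  show ?thesis
  proof (cases "q = a")
    case True then show ?thesis using ab by blast
  next
    case False then have "q = b" using ab assms(3) by blast
    then show ?thesis using ab adj_sym[of E a b] by (metis insert_commute)
  qed
qed

lemma nbrs3:
  assumes "simple_graph V E" "degree V E q = 3" "adj E q a" "adj E q b" "adj E q c" "distinct [a,b,c]"
    "adj E q u"
  shows "u \<in> {a,b,c}"
proof -
  have fV: "finite V" using assms(1) unfolding simple_graph_def by simp
  have sub: "{a,b,c} \<subseteq> {w\<in>V. adj E q w}" using assms(3-5) sg_adjV[OF assms(1)] by auto
  have "card {a,b,c} = 3" using assms(6) by simp
  then have eq: "{a,b,c} = {w\<in>V. adj E q w}"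
    using card_subset_eq[OF _ sub] fV assms(2) unfolding degree_def by simp
  have "u \<in> V" using sg_adjV[OF assms(1) assms(7)] by simp
  then show ?thesis using eq assms(7) by blast
qed

lemma nbrs2:
  assumes "simple_graph V E" "degree V E q = 2" "adj E q a"
  obtains w where "adj E q w" "w \<noteq> a" "\<And>u. adj E q u \<Longrightarrow> u = a \<or> u = w"
proof -
  have fV: "finite V" using assms(1) unfolding simple_graph_def by simp
  let ?N = "{w\<in>V. adj E q w}"
  have aN: "a \<in> ?N" using assms(3) sg_adjV[OF assms(1) assms(3)] by simp
  have "card (?N - {a}) = 1" using assms(2) aN fV unfolding degree_def by (simp add: card_Diff_singleton)
  then obtain w where w: "?N - {a} = {w}" by (rule card_1_singletonE)
  have "adj E q w" "w \<noteq> a" using w by blast+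
  moreover have "\<And>u. adj E q u \<Longrightarrow> u = a \<or> u = w"
  proof -
    fix u assume "adj E q u"
    then have "u \<in> ?N" using sg_adjV[OF assms(1)] by blast
    then show "u = a \<or> u = w" using w by blast
  qed
  ultimately show ?thesis using that by blast
qed

lemma missing_color:
  assumes "finite S" "card S \<le> 8"
  shows "\<exists>m\<in>{1..9::nat}. m \<notin> S"
proof (rule ccontr)
  assume "\<not> ?thesis"
  then have "{1..9::nat} \<subseteq> S" by auto
  then have "card {1..9::nat} \<le> card S" using assms(1) by (rule card_mono[rotated])
  then show False using assms(2) by simp
qed



lemma extend:
  fixes V :: "'a set" and E :: "'a set set" and cv :: "'a \<Rightarrow> nat" and ce :: "'a set \<Rightarrow> nat"
  assumes sg: "simple_graph V E"
  and col: "total_coloring V (E - {{v,x}}) 9 cv ce"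
  and dv: "degree V E v = 8"
  and dst: "distinct [x, y, z, t, r]"
  and avx: "adj E v x" and avy: "adj E v y" and avz: "adj E v z" and avt: "adj E v t" and avr: "adj E v r"
  and pn: "p \<notin> {v, x, y, z, t, r}"
  and dx: "degree V E x = 2" and dz: "degree V E z = 3" and dt: "degree V E t = 3"
  and ayz: "adj E y z" and atr: "adj E t r" and apz: "adj E p z" and apt: "adj E p t"
  shows "total_colorable V E 9"
proof -
  have fV: "finite V" using sg unfolding simple_graph_def by simp
  have D: "distinct [v,x,y,z,t,r,p]" using dst pn avx avy avz avt avr unfolding adj_def by auto
  have nv: "v \<noteq> x" "v \<noteq> y" "v \<noteq> z" "v \<noteq> t" "v \<noteq> r" "v \<noteq> p"
     "x \<noteq> y" "x \<noteq> z" "x \<noteq> t" "x \<noteq> r" "x \<noteq> p" "y \<noteq> z" "y \<noteq> t" "y \<noteq> r" "y \<noteq> p"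
     "z \<noteq> t" "z \<noteq> r" "z \<noteq> p" "t \<noteq> r" "t \<noteq> p" "r \<noteq> p" using D by auto
  note nv' = nv[symmetric]
  let ?E' = "E - {{v,x}}"
  note cc = col[unfolded total_coloring_def]
  note C1 = conjunct1[OF cc] and C2 = conjunct1[OF conjunct2[OF cc]]
    and C3 = conjunct1[OF conjunct2[OF conjunct2[OF cc]]]
    and C4 = conjunct1[OF conjunct2[OF conjunct2[OF conjunct2[OF cc]]]]
    and C5 = conjunct2[OF conjunct2[OF conjunct2[OF conjunct2[OF cc]]]]
  have C2': "\<And>e. e \<in> ?E' \<Longrightarrow> ce e \<in> {1..9}" using C2 by blast
  have C3': "\<And>a b. a \<in> V \<Longrightarrow> b \<in> V \<Longrightarrow> adj ?E' a b \<Longrightarrow> cv a \<noteq> cv b" using C3 by blast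
  have C4': "\<And>e e'. e \<in> ?E' \<Longrightarrow> e' \<in> ?E' \<Longrightarrow> e \<noteq> e' \<Longrightarrow> e \<inter> e' \<noteq> {} \<Longrightarrow> ce e \<noteq> ce e'"
    using C4 by blast
  have C5': "\<And>e a. e \<in> ?E' \<Longrightarrow> a \<in> e \<Longrightarrow> cv a \<noteq> ce e" using C5 by blast
  have inE: "\<And>q u. adj E q u \<Longrightarrow> {q,u} \<in> E" unfolding adj_def by blast
  have ne: "\<And>q u. adj E q u \<Longrightarrow> q \<noteq> u" unfolding adj_def by blast
  have OE: "\<And>q u u'. adj E q u \<Longrightarrow> adj E q u' \<Longrightarrow> u \<noteq> u' \<Longrightarrow> {q,u} \<noteq> {v,x} \<Longrightarrow> {q,u'} \<noteq> {v,x}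
      \<Longrightarrow> ce {q,u} \<noteq> ce {q,u'}"
  proof -
    fix q u u' assume h: "adj E q u" "adj E q u'" "u \<noteq> u'" "{q,u} \<noteq> {v,x}" "{q,u'} \<noteq> {v,x}"
    have "{q,u} \<in> ?E'" using inE[OF h(1)] h(4) by simp
    moreover have "{q,u'} \<in> ?E'" using inE[OF h(2)] h(5) by simp
    moreover have "{q,u} \<noteq> {q,u'}" using h(3) ne[OF h(1)] ne[OF h(2)] by (auto simp: doubleton_eq_iff)
    moreover have "{q,u} \<inter> {q,u'} \<noteq> {}" by simp
    ultimately show "ce {q,u} \<noteq> ce {q,u'}" by (rule C4')
  qed
  have OV: "\<And>q u. adj E q u \<Longrightarrow> {q,u} \<noteq> {v,x} \<Longrightarrow> cv q \<noteq> ce {q,u}"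
  proof -
    fix q u assume h: "adj E q u" "{q,u} \<noteq> {v,x}"
    have "{q,u} \<in> ?E'" using inE[OF h(1)] h(2) by simp
    then show "cv q \<noteq> ce {q,u}" by (rule C5') simp
  qed
  have OR: "\<And>q u. adj E q u \<Longrightarrow> {q,u} \<noteq> {v,x} \<Longrightarrow> ce {q,u} \<in> {1..9}"
  proof -
    fix q u assume h: "adj E q u" "{q,u} \<noteq> {v,x}"
    have "{q,u} \<in> ?E'" using inE[OF h(1)] h(2) by simp
    then show "ce {q,u} \<in> {1..9}" by (rule C2')
  qed
  have ON: "\<And>q u. adj E q u \<Longrightarrow> {q,u} \<noteq> {v,x} \<Longrightarrow> cv q \<noteq> cv u"
  proof -
    fix q u assume h: "adj E q u" "{q,u} \<noteq> {v,x}"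
    have "adj ?E' q u" using inE[OF h(1)] h(2) ne[OF h(1)] unfolding adj_def by simp
    moreover have "q \<in> V" "u \<in> V" using sg_adjV[OF sg h(1)] by auto
    ultimately show "cv q \<noteq> cv u" using C3' by blast
  qed
  have sym: "\<And>q u. adj E q u \<Longrightarrow> adj E u q" using adj_sym by metis
  have Nz: "\<And>u. adj E z u \<Longrightarrow> u \<in> {v,y,p}"
    using nbrs3[OF sg dz sym[OF avz] sym[OF ayz] sym[OF apz]] D by simp
  have Nt: "\<And>u. adj E t u \<Longrightarrow> u \<in> {v,r,p}"
    using nbrs3[OF sg dt sym[OF avt] atr sym[OF apt]] D by simp
  obtain w where axw: "adj E x w" and wv: "w \<noteq> v" and Nx: "\<And>u. adj E x u \<Longrightarrow> u = v \<or> u = w"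
    using nbrs2[OF sg dx sym[OF avx]] by blast
  have wx: "w \<noteq> x" using ne[OF axw] by simp
  have wz: "w \<noteq> z"
  proof
    assume "w = z"
    then have "adj E z x" using sym[OF axw] by simp
    then show False using Nz nv by auto
  qed
  have wt: "w \<noteq> t"
  proof
    assume "w = t"
    then have "adj E t x" using sym[OF axw] by simp
    then show False using Nt nv by auto
  qed
  have xvx: "{x,v} = {v,x}" by (rule insert_commute)
  define ca where "ca = ce {v,y}"
  define cb where "cb = ce {v,r}"
  define cg where "cg = ce {v,z}"
  define cd where "cd = ce {v,t}"
  define c1 where "c1 = ce {z,y}"
  define c2 where "c2 = ce {z,p}"
  define d1 where "d1 = ce {t,r}"
  define d2 where "d2 = ce {t,p}"
  define om where "om = ce {x,w}"
  note ds = doubleton_eq_iff nv nv'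
  let ?N = "{u\<in>V. adj E v u}"
  let ?S = "insert (cv v) ((\<lambda>u. ce {v,u}) ` (?N - {x}))"
  have xN: "x \<in> ?N" using avx sg_adjV[OF sg avx] by simp
  have fN: "finite ?N" using fV by simp
  have cN: "card (?N - {x}) = 7" using dv xN fN unfolding degree_def by (simp add: card_Diff_singleton)
  have "card ((\<lambda>u. ce {v,u}) ` (?N - {x})) \<le> 7" using card_image_le[of "?N - {x}" "\<lambda>u. ce {v,u}"] fN cN by simp
  moreover have fI: "finite ((\<lambda>u. ce {v,u}) ` (?N - {x}))" using fN by simp
  moreover have "card ?S \<le> Suc (card ((\<lambda>u. ce {v,u}) ` (?N - {x})))" by (simp add: card_insert_if[OF fI])
  ultimately have "card ?S \<le> 8" by linarith
  then obtain m where m: "m \<in> {1..9}" "m \<notin> ?S" using missing_color[of ?S] fN by auto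
  have mv: "m \<noteq> cv v" using m by auto
  have mE: "\<And>u. adj E v u \<Longrightarrow> u \<noteq> x \<Longrightarrow> ce {v,u} \<noteq> m"
  proof -
    fix u assume "adj E v u" "u \<noteq> x"
    then have "u \<in> ?N - {x}" using sg_adjV[OF sg] by blast
    then show "ce {v,u} \<noteq> m" using m(2) by blast
  qed
  have vxn: "\<And>u. u \<noteq> x \<Longrightarrow> {v,u} \<noteq> {v,x}" using nv(1) by (simp add: doubleton_eq_iff)
  have qxn: "\<And>q u. q \<noteq> v \<Longrightarrow> q \<noteq> x \<Longrightarrow> {q,u} \<noteq> {v,x}" by (simp add: doubleton_eq_iff)
  have Ev: "\<And>u u'. adj E v u \<Longrightarrow> adj E v u' \<Longrightarrow> u \<noteq> u' \<Longrightarrow> u \<noteq> x \<Longrightarrow> u' \<noteq> x \<Longrightarrow> ce {v,u} \<noteq> ce {v,u'}"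
    using OE[OF _ _ _ vxn vxn] by blast
  have Eq: "\<And>q u u'. adj E q u \<Longrightarrow> adj E q u' \<Longrightarrow> u \<noteq> u' \<Longrightarrow> q \<noteq> v \<Longrightarrow> q \<noteq> x \<Longrightarrow> ce {q,u} \<noteq> ce {q,u'}"
    using OE[OF _ _ _ qxn qxn] by blast
  have cyz: "{y,z} = {z,y}" "{y,v} = {v,y}" "{z,v} = {v,z}" "{p,z} = {z,p}" "{r,t} = {t,r}" "{r,v} = {v,r}"
    "{t,v} = {v,t}" "{p,t} = {t,p}" by (simp_all add: insert_commute)
  have dab: "distinct [ca,cb,cg,cd,m]"
    unfolding ca_def cb_def cg_def cd_def using Ev[OF avy avr] Ev[OF avy avz] Ev[OF avy avt] Ev[OF avr avz]
      Ev[OF avr avt] Ev[OF avz avt] mE[OF avy] mE[OF avr] mE[OF avz] mE[OF avt] nv nv' by auto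
  have h1: "c1 \<noteq> ca" unfolding c1_def ca_def using Eq[OF ayz sym[OF avy]] nv nv' cyz by auto
  have h2: "c1 \<noteq> cg" unfolding c1_def cg_def using Eq[OF sym[OF ayz] sym[OF avz]] nv nv' cyz by auto
  have h3: "c2 \<noteq> cg" unfolding c2_def cg_def using Eq[OF sym[OF apz] sym[OF avz]] nv nv' cyz by auto
  have h4: "c2 \<noteq> c1" unfolding c2_def c1_def using Eq[OF sym[OF apz] sym[OF ayz]] nv nv' cyz by auto
  have h5: "d1 \<noteq> cb" unfolding d1_def cb_def using Eq[OF sym[OF atr] sym[OF avr]] nv nv' cyz by auto
  have h6: "d1 \<noteq> cd" unfolding d1_def cd_def using Eq[OF atr sym[OF avt]] nv nv' cyz by auto
  have h7: "d2 \<noteq> cd" unfolding d2_def cd_def using Eq[OF sym[OF apt] sym[OF avt]] nv nv' cyz by auto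
  have h8: "d2 \<noteq> d1" unfolding d2_def d1_def using Eq[OF sym[OF apt] atr] nv nv' cyz by auto
  have h9: "d2 \<noteq> c2" unfolding d2_def c2_def using Eq[OF apt apz] nv nv' cyz by auto
  obtain nvx nvy nvz nvt nvr nzy nzp ntr ntp where
    K: "okc ca cb cg cd m c1 c2 d1 d2 om nvx nvy nvz nvt nvr nzy nzp ntr ntp"
    using core[OF dab h1 h2 h3 h4 h5 h6 h7 h8 h9, of om] by blast
  note KK = K[unfolded okc_def]
  note K1 = KK[THEN conjunct1]
  note K2 = KK[THEN conjunct2, THEN conjunct1]
  note K3 = KK[THEN conjunct2, THEN conjunct2, THEN conjunct1]
  note K4 = KK[THEN conjunct2, THEN conjunct2, THEN conjunct2, THEN conjunct1]
  note K5a = KK[THEN conjunct2, THEN conjunct2, THEN conjunct2, THEN conjunct2, THEN conjunct1]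
  note K5b = KK[THEN conjunct2, THEN conjunct2, THEN conjunct2, THEN conjunct2, THEN conjunct2, THEN conjunct1]
  note K5c = KK[THEN conjunct2, THEN conjunct2, THEN conjunct2, THEN conjunct2, THEN conjunct2, THEN conjunct2, THEN conjunct1]
  note K5d = KK[THEN conjunct2, THEN conjunct2, THEN conjunct2, THEN conjunct2, THEN conjunct2, THEN conjunct2, THEN conjunct2, THEN conjunct1]
  note K5e = KK[THEN conjunct2, THEN conjunct2, THEN conjunct2, THEN conjunct2, THEN conjunct2, THEN conjunct2, THEN conjunct2, THEN conjunct2, THEN conjunct1]
  note K6 = KK[THEN conjunct2, THEN conjunct2, THEN conjunct2, THEN conjunct2, THEN conjunct2, THEN conjunct2, THEN conjunct2, THEN conjunct2, THEN conjunct2, THEN conjunct1]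
  note K7 = KK[THEN conjunct2, THEN conjunct2, THEN conjunct2, THEN conjunct2, THEN conjunct2, THEN conjunct2, THEN conjunct2, THEN conjunct2, THEN conjunct2, THEN conjunct2, THEN conjunct1]
  note K8 = KK[THEN conjunct2, THEN conjunct2, THEN conjunct2, THEN conjunct2, THEN conjunct2, THEN conjunct2, THEN conjunct2, THEN conjunct2, THEN conjunct2, THEN conjunct2, THEN conjunct2]
  note K5 = K5a K5b K5c K5d K5e
  define ce2 where "ce2 e = (if e = {v,x} then nvx else if e = {v,y} then nvy else if e = {v,z} then nvz
     else if e = {v,t} then nvt else if e = {v,r} then nvr else if e = {z,y} then nzy else if e = {z,p} then nzp
     else if e = {t,r} then ntr else if e = {t,p} then ntp else ce e)" for e
  have e_vx: "ce2 {v,x} = nvx" "ce2 {x,v} = nvx" unfolding ce2_def using nv nv' by (simp_all add: doubleton_eq_iff)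
  have e_vy: "ce2 {v,y} = nvy" "ce2 {y,v} = nvy" unfolding ce2_def using nv nv' by (simp_all add: doubleton_eq_iff)
  have e_vz: "ce2 {v,z} = nvz" "ce2 {z,v} = nvz" unfolding ce2_def using nv nv' by (simp_all add: doubleton_eq_iff)
  have e_vt: "ce2 {v,t} = nvt" "ce2 {t,v} = nvt" unfolding ce2_def using nv nv' by (simp_all add: doubleton_eq_iff)
  have e_vr: "ce2 {v,r} = nvr" "ce2 {r,v} = nvr" unfolding ce2_def using nv nv' by (simp_all add: doubleton_eq_iff)
  have e_zy: "ce2 {z,y} = nzy" "ce2 {y,z} = nzy" unfolding ce2_def using nv nv' by (simp_all add: doubleton_eq_iff)
  have e_zp: "ce2 {z,p} = nzp" "ce2 {p,z} = nzp" unfolding ce2_def using nv nv' by (simp_all add: doubleton_eq_iff)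
  have e_tr: "ce2 {t,r} = ntr" "ce2 {r,t} = ntr" unfolding ce2_def using nv nv' by (simp_all add: doubleton_eq_iff)
  have e_tp: "ce2 {t,p} = ntp" "ce2 {p,t} = ntp" unfolding ce2_def using nv nv' by (simp_all add: doubleton_eq_iff)
  have e_xw: "ce2 {x,w} = om" unfolding ce2_def om_def using nv nv' wv by (simp add: doubleton_eq_iff)
  have o_v: "\<And>u. u \<notin> {x,y,z,t,r} \<Longrightarrow> ce2 {v,u} = ce {v,u}"
    unfolding ce2_def using nv nv' by (simp add: doubleton_eq_iff)
  have o_y: "\<And>u. u \<notin> {v,z} \<Longrightarrow> ce2 {y,u} = ce {y,u}"
    unfolding ce2_def using nv nv' by (simp add: doubleton_eq_iff)
  have o_r: "\<And>u. u \<notin> {v,t} \<Longrightarrow> ce2 {r,u} = ce {r,u}"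
    unfolding ce2_def using nv nv' by (simp add: doubleton_eq_iff)
  have o_p: "\<And>u. u \<notin> {z,t} \<Longrightarrow> ce2 {p,u} = ce {p,u}"
    unfolding ce2_def using nv nv' by (simp add: doubleton_eq_iff)
  have o_q: "\<And>q u. q \<notin> {v,x,y,z,t,r,p} \<Longrightarrow> ce2 {q,u} = ce {q,u}"
    unfolding ce2_def by (simp add: doubleton_eq_iff)
  have xn: "x \<noteq> v" "y \<noteq> x" "z \<noteq> x" "t \<noteq> x" "r \<noteq> x" "p \<noteq> x" using nv by auto
  have xwn: "{x,w} \<noteq> {v,x}" using wv xn by (simp add: doubleton_eq_iff)
  have rng: "ca \<in> {1..9}" "cb \<in> {1..9}" "cg \<in> {1..9}" "cd \<in> {1..9}" "c1 \<in> {1..9}" "c2 \<in> {1..9}"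
    "d1 \<in> {1..9}" "d2 \<in> {1..9}" "om \<in> {1..9}"
    unfolding ca_def cb_def cg_def cd_def c1_def c2_def d1_def d2_def om_def
    by (rule OR[OF avy vxn[OF xn(2)]], rule OR[OF avr vxn[OF xn(5)]], rule OR[OF avz vxn[OF xn(3)]],
      rule OR[OF avt vxn[OF xn(4)]],
      rule OR[OF sym[OF ayz] qxn[OF nv'(3) xn(3)]], rule OR[OF sym[OF apz] qxn[OF nv'(3) xn(3)]],
      rule OR[OF atr qxn[OF nv'(4) xn(4)]], rule OR[OF sym[OF apt] qxn[OF nv'(4) xn(4)]],
      rule OR[OF axw xwn])
  have nrng: "nvx \<in> {1..9}" "nvy \<in> {1..9}" "nvz \<in> {1..9}" "nvt \<in> {1..9}" "nvr \<in> {1..9}"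
    "nzy \<in> {1..9}" "nzp \<in> {1..9}" "ntr \<in> {1..9}" "ntp \<in> {1..9}"
  proof -
    have A: "\<And>q. q \<in> {ca,cb,cg,cd,m} \<Longrightarrow> q \<in> {1..9}" using rng(1-4) m(1) by blast
    show "nvx \<in> {1..9}" "nvy \<in> {1..9}" "nvz \<in> {1..9}" "nvt \<in> {1..9}" "nvr \<in> {1..9}"
      using A K5 by blast+
    show "nzy \<in> {1..9}" using K1 rng by metis
    show "nzp \<in> {1..9}" "ntp \<in> {1..9}" using K3 rng by metis+
    show "ntr \<in> {1..9}" using K2 rng by metis
  qed
  obtain cx where cx: "cx \<in> {1..9}" "cx \<notin> {cv v, cv w, nvx, om, om, om}" using pick6 by blast
  obtain cz where cz: "cz \<in> {1..9}" "cz \<notin> {cv v, cv y, cv p, nvz, nzy, nzp}" using pick6 by blast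
  obtain ct where ct: "ct \<in> {1..9}" "ct \<notin> {cv v, cv r, cv p, nvt, ntr, ntp}" using pick6 by blast
  define cv2 where "cv2 = cv(x := cx, z := cz, t := ct)"
  have cv2x: "cv2 x = cx" and cv2z: "cv2 z = cz" and cv2t: "cv2 t = ct"
    unfolding cv2_def using nv by auto
  have cv2o: "\<And>q. q \<notin> {x,z,t} \<Longrightarrow> cv2 q = cv q" unfolding cv2_def by simp
  have wo: "w \<notin> {x,z,t}" using wx wz wt by simp
  have split: "\<And>q P. (q = v \<Longrightarrow> P) \<Longrightarrow> (q = x \<Longrightarrow> P) \<Longrightarrow> (q = z \<Longrightarrow> P) \<Longrightarrow> (q = t \<Longrightarrow> P) \<Longrightarrow>
      (q = y \<Longrightarrow> P) \<Longrightarrow> (q = r \<Longrightarrow> P) \<Longrightarrow> (q = p \<Longrightarrow> P) \<Longrightarrow> (q \<notin> {v,x,y,z,t,r,p} \<Longrightarrow> P) \<Longrightarrow> P"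
    by blast
  have Nx': "\<And>u. adj E x u \<Longrightarrow> u \<in> {v,w}" using Nx by blast
  have vin: "\<And>u. adj E v u \<Longrightarrow> u \<in> {x,y,z,t,r} \<Longrightarrow> ce2 {v,u} \<in> {ca,cb,cg,cd,m}"
  proof -
    fix u assume "u \<in> {x,y,z,t,r}"
    then have "u = x \<or> u = y \<or> u = z \<or> u = t \<or> u = r" by simp
    then show "ce2 {v,u} \<in> {ca,cb,cg,cd,m}"
      by (elim disjE) (simp_all only: K5 e_vx e_vy e_vz e_vt e_vr)
  qed
  have vout: "\<And>u. adj E v u \<Longrightarrow> u \<notin> {x,y,z,t,r} \<Longrightarrow> ce2 {v,u} = ce {v,u} \<and> ce {v,u} \<notin> {ca,cb,cg,cd,m}"
  proof -
    fix u assume h: "adj E v u" "u \<notin> {x,y,z,t,r}"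
    have "ce {v,u} \<noteq> ca" unfolding ca_def using Ev[OF h(1) avy] h(2) nv by auto
    moreover have "ce {v,u} \<noteq> cb" unfolding cb_def using Ev[OF h(1) avr] h(2) nv by auto
    moreover have "ce {v,u} \<noteq> cg" unfolding cg_def using Ev[OF h(1) avz] h(2) nv by auto
    moreover have "ce {v,u} \<noteq> cd" unfolding cd_def using Ev[OF h(1) avt] h(2) nv by auto
    moreover have "ce {v,u} \<noteq> m" using mE[OF h(1)] h(2) by auto
    ultimately show "ce2 {v,u} = ce {v,u} \<and> ce {v,u} \<notin> {ca,cb,cg,cd,m}" using o_v[OF h(2)] by simp
  qed
  have yout: "\<And>u. adj E y u \<Longrightarrow> u \<notin> {v,z} \<Longrightarrow> ce2 {y,u} = ce {y,u} \<and> ce {y,u} \<noteq> ca \<and> ce {y,u} \<noteq> c1"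
  proof -
    fix u assume h: "adj E y u" "u \<notin> {v,z}"
    have "ce {y,u} \<noteq> ce {y,v}" using Eq[OF h(1) sym[OF avy]] h(2) nv by auto
    moreover have "ce {y,u} \<noteq> ce {y,z}" using Eq[OF h(1) ayz] h(2) nv by auto
    ultimately show "ce2 {y,u} = ce {y,u} \<and> ce {y,u} \<noteq> ca \<and> ce {y,u} \<noteq> c1"
      using o_y[OF h(2)] unfolding ca_def c1_def by (simp add: cyz)
  qed
  have rout: "\<And>u. adj E r u \<Longrightarrow> u \<notin> {v,t} \<Longrightarrow> ce2 {r,u} = ce {r,u} \<and> ce {r,u} \<noteq> cb \<and> ce {r,u} \<noteq> d1"
  proof -
    fix u assume h: "adj E r u" "u \<notin> {v,t}"
    have "ce {r,u} \<noteq> ce {r,v}" using Eq[OF h(1) sym[OF avr]] h(2) nv by auto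
    moreover have "ce {r,u} \<noteq> ce {r,t}" using Eq[OF h(1) sym[OF atr]] h(2) nv by auto
    ultimately show "ce2 {r,u} = ce {r,u} \<and> ce {r,u} \<noteq> cb \<and> ce {r,u} \<noteq> d1"
      using o_r[OF h(2)] unfolding cb_def d1_def by (simp add: cyz)
  qed
  have pout: "\<And>u. adj E p u \<Longrightarrow> u \<notin> {z,t} \<Longrightarrow> ce2 {p,u} = ce {p,u} \<and> ce {p,u} \<noteq> c2 \<and> ce {p,u} \<noteq> d2"
  proof -
    fix u assume h: "adj E p u" "u \<notin> {z,t}"
    have "ce {p,u} \<noteq> ce {p,z}" using Eq[OF h(1) apz] h(2) nv by auto
    moreover have "ce {p,u} \<noteq> ce {p,t}" using Eq[OF h(1) apt] h(2) nv by auto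
    ultimately show "ce2 {p,u} = ce {p,u} \<and> ce {p,u} \<noteq> c2 \<and> ce {p,u} \<noteq> d2"
      using o_p[OF h(2)] unfolding c2_def d2_def by (simp add: cyz)
  qed
  have EQ4: "\<And>q u u'. adj E q u \<Longrightarrow> adj E q u' \<Longrightarrow> u \<noteq> u' \<Longrightarrow> ce2 {q,u} \<noteq> ce2 {q,u'}"
  proof -
    fix q u u' assume h: "adj E q u" "adj E q u'" "u \<noteq> u'"
    show "ce2 {q,u} \<noteq> ce2 {q,u'}"
    proof (rule split[of q])
      assume q: "q = v"
      show ?thesis
      proof (cases "u \<in> {x,y,z,t,r}")
        case True note uT = True
        show ?thesis
        proof (cases "u' \<in> {x,y,z,t,r}")
          case True
          have "u = x \<or> u = y \<or> u = z \<or> u = t \<or> u = r" using uT by simp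
          moreover have "u' = x \<or> u' = y \<or> u' = z \<or> u' = t \<or> u' = r" using True by simp
          moreover have K4s: "distinct [nvr,nvt,nvz,nvy,nvx]" using K4 by auto
          ultimately show ?thesis using q h(3) K4 e_vx e_vy e_vz e_vt e_vr by (elim disjE) simp_all
        next
          case False
          then show ?thesis using q vin[OF _ uT] vout[OF _ False] h by force
        qed
      next
        case False note uF = False
        show ?thesis
        proof (cases "u' \<in> {x,y,z,t,r}")
          case True
          then show ?thesis using q vin[OF _ True] vout[OF _ uF] h by force
        next
          case False
          then have "ce {v,u} \<noteq> ce {v,u'}" using Ev[of u u'] h q uF by simp
          then show ?thesis using vout[OF _ False] vout[OF _ uF] h q by simp
        qed
      qed
    next
      assume q: "q = x"
      have "u \<in> {v,w}" "u' \<in> {v,w}" using Nx' h q by auto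
      then have "(u = v \<and> u' = w) \<or> (u = w \<and> u' = v)" using h(3) by auto
      then show ?thesis using q e_vx e_xw K8 by auto
    next
      assume q: "q = z"
      have "u \<in> {v,y,p}" "u' \<in> {v,y,p}" using Nz h q by auto
      then show ?thesis using q h(3) K6 e_vz e_zy e_zp by auto
    next
      assume q: "q = t"
      have "u \<in> {v,r,p}" "u' \<in> {v,r,p}" using Nt h q by auto
      then show ?thesis using q h(3) K7 e_vt e_tr e_tp by auto
    next
      assume q: "q = y"
      have new: "\<And>u. u \<in> {v,z} \<Longrightarrow> ce2 {y,u} \<in> {ca,c1}" using K1 e_vy e_zy by auto
      have nd: "ce2 {y,v} \<noteq> ce2 {y,z}" using K1 h1 e_vy e_zy by auto
      show ?thesis
      proof (cases "u \<in> {v,z}")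
        case True note uT = True
        show ?thesis
        proof (cases "u' \<in> {v,z}")
          case True then show ?thesis using uT h(3) nd q by auto
        next
          case False then show ?thesis using new[OF uT] yout[OF _ False] h q by force
        qed
      next
        case False note uF = False
        show ?thesis
        proof (cases "u' \<in> {v,z}")
          case True then show ?thesis using new[OF True] yout[OF _ uF] h q by force
        next
          case False
          then show ?thesis using yout[OF _ False] yout[OF _ uF] Eq[of y u u'] h q nv by simp
        qed
      qed
    next
      assume q: "q = r"
      have new: "\<And>u. u \<in> {v,t} \<Longrightarrow> ce2 {r,u} \<in> {cb,d1}" using K2 e_vr e_tr by auto
      have nd: "ce2 {r,v} \<noteq> ce2 {r,t}" using K2 h5 e_vr e_tr by auto
      show ?thesis
      proof (cases "u \<in> {v,t}")
        case True note uT = True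
        show ?thesis
        proof (cases "u' \<in> {v,t}")
          case True then show ?thesis using uT h(3) nd q by auto
        next
          case False then show ?thesis using new[OF uT] rout[OF _ False] h q by force
        qed
      next
        case False note uF = False
        show ?thesis
        proof (cases "u' \<in> {v,t}")
          case True then show ?thesis using new[OF True] rout[OF _ uF] h q by force
        next
          case False
          then show ?thesis using rout[OF _ False] rout[OF _ uF] Eq[of r u u'] h q nv by simp
        qed
      qed
    next
      assume q: "q = p"
      have new: "\<And>u. u \<in> {z,t} \<Longrightarrow> ce2 {p,u} \<in> {c2,d2}" using K3 e_zp e_tp by auto
      have nd: "ce2 {p,z} \<noteq> ce2 {p,t}" using K3 h9 e_zp e_tp by auto
      show ?thesis
      proof (cases "u \<in> {z,t}")
        case True note uT = True
        show ?thesis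
        proof (cases "u' \<in> {z,t}")
          case True then show ?thesis using uT h(3) nd q by auto
        next
          case False then show ?thesis using new[OF uT] pout[OF _ False] h q by force
        qed
      next
        case False note uF = False
        show ?thesis
        proof (cases "u' \<in> {z,t}")
          case True then show ?thesis using new[OF True] pout[OF _ uF] h q by force
        next
          case False
          then show ?thesis using pout[OF _ False] pout[OF _ uF] Eq[of p u u'] h q nv by simp
        qed
      qed
    next
      assume q: "q \<notin> {v,x,y,z,t,r,p}"
      then show ?thesis using o_q[OF q] Eq[of q u u'] h by simp
    qed
  qed
  have cvv: "cv v \<notin> {ca,cb,cg,cd,m}"
    unfolding ca_def cb_def cg_def cd_def
    using OV[OF avy vxn[OF xn(2)]] OV[OF avr vxn[OF xn(5)]] OV[OF avz vxn[OF xn(3)]] OV[OF avt vxn[OF xn(4)]] mv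
    by auto
  have EQ5: "\<And>q u. adj E q u \<Longrightarrow> cv2 q \<noteq> ce2 {q,u}"
  proof -
    fix q u assume h: "adj E q u"
    show "cv2 q \<noteq> ce2 {q,u}"
    proof (rule split[of q])
      assume q: "q = v"
      have c: "cv2 v = cv v" using cv2o nv by simp
      show ?thesis
      proof (cases "u \<in> {x,y,z,t,r}")
        case True then show ?thesis using vin[OF _ True] h q c cvv by force
      next
        case False then show ?thesis using vout[OF _ False] h q c OV[OF _ vxn] nv by force
      qed
    next
      assume q: "q = x"
      have "u = v \<or> u = w" using Nx h q by blast
      then show ?thesis using q cv2x cx e_vx e_xw by auto
    next
      assume q: "q = z"
      have "u \<in> {v,y,p}" using Nz h q by blast
      then show ?thesis using q cv2z cz e_vz e_zy e_zp by auto
    next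
      assume q: "q = t"
      have "u \<in> {v,r,p}" using Nt h q by blast
      then show ?thesis using q cv2t ct e_vt e_tr e_tp by auto
    next
      assume q: "q = y"
      have c: "cv2 y = cv y" using cv2o nv by simp
      have n1: "cv y \<noteq> ca" "cv y \<noteq> c1" unfolding ca_def c1_def
        using OV[OF sym[OF avy] qxn[OF nv'(2) xn(2)]] OV[OF ayz qxn[OF nv'(2) xn(2)]] cyz by auto
      show ?thesis
      proof (cases "u \<in> {v,z}")
        case True then show ?thesis using q c n1 K1 e_vy e_zy by auto
      next
        case False then show ?thesis using yout[OF _ False] h q c OV[OF _ qxn[OF nv'(2) xn(2)]] by force
      qed
    next
      assume q: "q = r"
      have c: "cv2 r = cv r" using cv2o nv by simp
      have n1: "cv r \<noteq> cb" "cv r \<noteq> d1" unfolding cb_def d1_def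
        using OV[OF sym[OF avr] qxn[OF nv'(5) xn(5)]] OV[OF sym[OF atr] qxn[OF nv'(5) xn(5)]] cyz by auto
      show ?thesis
      proof (cases "u \<in> {v,t}")
        case True then show ?thesis using q c n1 K2 e_vr e_tr by auto
      next
        case False then show ?thesis using rout[OF _ False] h q c OV[OF _ qxn[OF nv'(5) xn(5)]] by force
      qed
    next
      assume q: "q = p"
      have c: "cv2 p = cv p" using cv2o nv by simp
      have n1: "cv p \<noteq> c2" "cv p \<noteq> d2" unfolding c2_def d2_def
        using OV[OF apz qxn[OF nv'(6) xn(6)]] OV[OF apt qxn[OF nv'(6) xn(6)]] cyz by auto
      show ?thesis
      proof (cases "u \<in> {z,t}")
        case True then show ?thesis using q c n1 K3 e_zp e_tp by auto
      next
        case False then show ?thesis using pout[OF _ False] h q c OV[OF _ qxn[OF nv'(6) xn(6)]] by force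
      qed
    next
      assume q: "q \<notin> {v,x,y,z,t,r,p}"
      then have "cv2 q = cv q" using cv2o by simp
      moreover have "{q,u} \<noteq> {v,x}" using qxn q by simp
      ultimately show ?thesis using o_q[OF q] OV[OF h] by simp
    qed
  qed
  have EQ2: "\<And>q u. adj E q u \<Longrightarrow> ce2 {q,u} \<in> {1..9}"
  proof -
    fix q u assume h: "adj E q u"
    show "ce2 {q,u} \<in> {1..9}"
    proof (rule split[of q])
      assume q: "q = v"
      show ?thesis
      proof (cases "u \<in> {x,y,z,t,r}")
        case True then show ?thesis using vin[OF _ True] h q rng m(1) by force
      next
        case False then show ?thesis using vout[OF _ False] h q OR[OF _ vxn] nv by force
      qed
    next
      assume q: "q = x"
      have "u = v \<or> u = w" using Nx h q by blast
      then show ?thesis using q e_vx e_xw nrng rng by auto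
    next
      assume q: "q = z"
      have "u \<in> {v,y,p}" using Nz h q by blast
      then show ?thesis using q e_vz e_zy e_zp nrng by auto
    next
      assume q: "q = t"
      have "u \<in> {v,r,p}" using Nt h q by blast
      then show ?thesis using q e_vt e_tr e_tp nrng by auto
    next
      assume q: "q = y"
      show ?thesis
      proof (cases "u \<in> {v,z}")
        case True then show ?thesis using q e_vy e_zy nrng by auto
      next
        case False then show ?thesis using yout[OF _ False] h q OR[OF _ qxn[OF nv'(2) xn(2)]] by force
      qed
    next
      assume q: "q = r"
      show ?thesis
      proof (cases "u \<in> {v,t}")
        case True then show ?thesis using q e_vr e_tr nrng by auto
      next
        case False then show ?thesis using rout[OF _ False] h q OR[OF _ qxn[OF nv'(5) xn(5)]] by force
      qed
    next
      assume q: "q = p"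
      show ?thesis
      proof (cases "u \<in> {z,t}")
        case True then show ?thesis using q e_zp e_tp nrng by auto
      next
        case False then show ?thesis using pout[OF _ False] h q OR[OF _ qxn[OF nv'(6) xn(6)]] by force
      qed
    next
      assume q: "q \<notin> {v,x,y,z,t,r,p}"
      moreover have "{q,u} \<noteq> {v,x}" using qxn q by simp
      ultimately show ?thesis using o_q OR[OF h] by simp
    qed
  qed
  have H3: "\<And>q u. adj E q u \<Longrightarrow> q \<in> {x,z,t} \<Longrightarrow> cv2 q \<noteq> cv2 u"
  proof -
    fix q u assume h: "adj E q u" "q \<in> {x,z,t}"
    then consider "q = x" | "q = z" | "q = t" by blast
    then show "cv2 q \<noteq> cv2 u"
    proof cases
      case 1
      then have "u = v \<or> u = w" using Nx h by blast
      then show ?thesis using 1 cv2x cx cv2o[of v] cv2o[OF wo] nv by auto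
    next
      case 2
      then have "u \<in> {v,y,p}" using Nz h by blast
      then show ?thesis using 2 cv2z cz cv2o[of v] cv2o[of y] cv2o[of p] nv by auto
    next
      case 3
      then have "u \<in> {v,r,p}" using Nt h by blast
      then show ?thesis using 3 cv2t ct cv2o[of v] cv2o[of r] cv2o[of p] nv by auto
    qed
  qed
  have EQ3: "\<And>q u. adj E q u \<Longrightarrow> cv2 q \<noteq> cv2 u"
  proof -
    fix q u assume h: "adj E q u"
    show "cv2 q \<noteq> cv2 u"
    proof (cases "q \<in> {x,z,t}")
      case True then show ?thesis using H3 h by blast
    next
      case False note qF = False
      show ?thesis
      proof (cases "u \<in> {x,z,t}")
        case True then show ?thesis using H3[OF sym[OF h]] by metis
      next
        case False
        have "{q,u} \<noteq> {v,x}" using qF False by (auto simp: doubleton_eq_iff)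
        then show ?thesis using ON[OF h] cv2o[OF qF] cv2o[OF False] by simp
      qed
    qed
  qed
  have "total_coloring V E 9 cv2 ce2"
    unfolding total_coloring_def
  proof (intro conjI ballI impI)
    fix u assume "u \<in> V"
    then show "cv2 u \<in> {1..9}" using C1 cv2o[of u] cv2x cv2z cv2t cx ct cz by (cases "u \<in> {x,z,t}") auto
  next
    fix e assume "e \<in> E"
    then obtain a1 b1 where "e = {a1,b1}" "adj E a1 b1" using sg_edge[OF sg] by blast
    then show "ce2 e \<in> {1..9}" using EQ2 by simp
  next
    fix a1 b1 assume "a1 \<in> V" "b1 \<in> V" "adj E a1 b1"
    then show "cv2 a1 \<noteq> cv2 b1" using EQ3 by simp
  next
    fix e e' assume h: "e \<in> E" "e' \<in> E" "e \<noteq> e' \<and> e \<inter> e' \<noteq> {}"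
    then obtain q where q: "q \<in> e" "q \<in> e'" by blast
    obtain u where u: "e = {q,u}" "adj E q u" using edge_at[OF sg h(1) q(1)] by blast
    obtain u' where u': "e' = {q,u'}" "adj E q u'" using edge_at[OF sg h(2) q(2)] by blast
    have "u \<noteq> u'" using h(3) u u' by blast
    then show "ce2 e \<noteq> ce2 e'" using EQ4[OF u(2) u'(2)] u u' by simp
  next
    fix e q assume h: "e \<in> E" "q \<in> e"
    obtain u where u: "e = {q,u}" "adj E q u" using edge_at[OF sg h] by blast
    then show "cv2 q \<noteq> ce2 e" using EQ5 by simp
  qed
  then show ?thesis unfolding total_colorable_def by blast
qed


theorem lemma2p13:
  fixes V :: "'a set" and E :: "'a set set"
  assumes "minimal_counterexample V E"
  shows "\<not> (\<exists>v x y z t r p.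
            v \<in> V \<and> degree V E v = 8 \<and>
            distinct [x, y, z, t, r] \<and>
            adj E v x \<and> adj E v y \<and> adj E v z \<and> adj E v t \<and> adj E v r \<and>
            p \<in> V \<and> p \<notin> {v, x, y, z, t, r} \<and>
            degree V E x = 2 \<and> degree V E z = 3 \<and> degree V E t = 3 \<and>
            adj E y z \<and> adj E t r \<and> adj E p z \<and> adj E p t)"
proof
  assume "\<exists>v x y z t r p.
            v \<in> V \<and> degree V E v = 8 \<and>
            distinct [x, y, z, t, r] \<and>
            adj E v x \<and> adj E v y \<and> adj E v z \<and> adj E v t \<and> adj E v r \<and>
            p \<in> V \<and> p \<notin> {v, x, y, z, t, r} \<and>
            degree V E x = 2 \<and> degree V E z = 3 \<and> degree V E t = 3 \<and>
            adj E y z \<and> adj E t r \<and> adj E p z \<and> adj E p t"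
  then obtain v x y z t r p where h:
    "v \<in> V" "degree V E v = 8" "distinct [x, y, z, t, r]"
    "adj E v x" "adj E v y" "adj E v z" "adj E v t" "adj E v r"
    "p \<in> V" "p \<notin> {v, x, y, z, t, r}"
    "degree V E x = 2" "degree V E z = 3" "degree V E t = 3"
    "adj E y z" "adj E t r" "adj E p z" "adj E p t" by blast
  have sg: "simple_graph V E" and nc: "\<not> total_colorable V E 9"
    using assms unfolding minimal_counterexample_def by blast+
  have "{v,x} \<in> E" using h(4) unfolding adj_def by blast
  then have "total_colorable V (E - {{v,x}}) 9" using reduce[OF assms] by blast
  then obtain cv ce where col: "total_coloring V (E - {{v,x}}) 9 cv ce"
    unfolding total_colorable_def by blast
  have "total_colorable V E 9"
    by (rule extend[OF sg col h(2) h(3) h(4) h(5) h(6) h(7) h(8) h(10) h(11) h(12) h(13) h(14) h(15) h(16) h(17)])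
  then show False using nc by blast
qed

end
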